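(* Let $X_1,\dots,X_n\in\mathbb{R}$, $Y\in\mathbb{R}^n$ and $\lambda\ge 0$. The univariate LISO problem $$\min_{\theta\in\mathcal{M}}\ \tfrac12\|Y-\theta\|^2+\lambda\big(\max_i\theta_i-\min_i\theta_i\big)$$ has a unique solution $\hat\theta_\lambda$, and there exist thresholds $A_\lambda\le B_\lambda$ (with $A_\lambda,B_\lambda\in[-\infty,\infty]$) such that $\hat\theta_\lambda=\hat\theta^{>A_\lambda,<B_\lambda}$, i.e. $(\hat\theta_\lambda)_i=\min\{B_\lambda,\max\{A_\lambda,\hat\theta^{\mathrm{PAVA}}_i\}\}$ for all $i$.
   Context: $\mathcal{M}$ denotes the set of vectors $\theta\in\mathbb{R}^n$ that are monotone in $X$: $\theta_i\le\theta_j$ whenever $X_i<X_j$, and $\theta_i=\theta_j$ whenever $X_i=X_j$. The PAVA fit $\hat\theta^{\mathrm{PAVA}}$ is the unique minimiser of $\|Y-\theta\|^2$ over $\theta\in\mathcal{M}$. For $A\le B$, the Winsorized PAVA vector $\hat\theta^{>A,<B}$ is obtained by replacing entries of $\hat\theta^{\mathrm{PAVA}}$ below $A$ by $A$ and entries above $B$ by $B$. *)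

theory Defs
  imports "HOL-Analysis.Analysis" "HOL-Library.Extended_Real"
begin

text \<open>Vectors in R^n are represented as functions nat => real that vanish
  outside the index set {..<n} (so that they are determined by n coordinates).\<close>

definition monoset :: "nat \<Rightarrow> (nat \<Rightarrow> real) \<Rightarrow> (nat \<Rightarrow> real) set" where
  "monoset n X = {\<theta>. (\<forall>i. n \<le> i \<longrightarrow> \<theta> i = 0) \<and>
      (\<forall>i<n. \<forall>j<n. (X i < X j \<longrightarrow> \<theta> i \<le> \<theta> j) \<and> (X i = X j \<longrightarrow> \<theta> i = \<theta> j))}"

definition sqdist :: "nat \<Rightarrow> (nat \<Rightarrow> real) \<Rightarrow> (nat \<Rightarrow> real) \<Rightarrow> real" where
  "sqdist n Y \<theta> = (\<Sum>i<n. (Y i - \<theta> i)\<^sup>2)"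

definition pava :: "nat \<Rightarrow> (nat \<Rightarrow> real) \<Rightarrow> (nat \<Rightarrow> real) \<Rightarrow> (nat \<Rightarrow> real)" where
  "pava n X Y = (THE \<theta>. \<theta> \<in> monoset n X \<and>
      (\<forall>\<eta>\<in>monoset n X. sqdist n Y \<theta> \<le> sqdist n Y \<eta>))"

definition liso_obj :: "nat \<Rightarrow> (nat \<Rightarrow> real) \<Rightarrow> real \<Rightarrow> (nat \<Rightarrow> real) \<Rightarrow> real" where
  "liso_obj n Y lam \<theta> = sqdist n Y \<theta> / 2 +
      lam * (Max (\<theta> ` {..<n}) - Min (\<theta> ` {..<n}))"

end

theory Submission
  imports Defs
begin

lemma cont_Max:
  fixes f :: "nat \<Rightarrow> (nat \<Rightarrow> real) \<Rightarrow> real"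
  assumes "finite I" "I \<noteq> {}" "\<And>i. i \<in> I \<Longrightarrow> continuous_on S (f i)"
  shows "continuous_on S (\<lambda>x. Max ((\<lambda>i. f i x) ` I))"
  using assms
proof (induction I rule: finite_ne_induct)
  case (singleton x) then show ?case by simp
next
  case (insert x F)
  have c: "continuous_on S (\<lambda>y. max (f x y) (Max ((\<lambda>i. f i y) ` F)))"
    using insert by (intro continuous_on_max) auto
  have eq: "\<And>y. max (f x y) (Max ((\<lambda>i. f i y) ` F)) = Max ((\<lambda>i. f i y) ` insert x F)"
    using insert.hyps by (simp add: Max.insert)
  show ?case
    by (rule continuous_on_cong[THEN iffD1, OF refl _ c]) (rule eq)
qed

lemma cont_Min:
  fixes f :: "nat \<Rightarrow> (nat \<Rightarrow> real) \<Rightarrow> real"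
  assumes "finite I" "I \<noteq> {}" "\<And>i. i \<in> I \<Longrightarrow> continuous_on S (f i)"
  shows "continuous_on S (\<lambda>x. Min ((\<lambda>i. f i x) ` I))"
  using assms
proof (induction I rule: finite_ne_induct)
  case (singleton x) then show ?case by simp
next
  case (insert x F)
  have c: "continuous_on S (\<lambda>y. min (f x y) (Min ((\<lambda>i. f i y) ` F)))"
    using insert by (intro continuous_on_min) auto
  have eq: "\<And>y. min (f x y) (Min ((\<lambda>i. f i y) ` F)) = Min ((\<lambda>i. f i y) ` insert x F)"
    using insert.hyps by (simp add: Min.insert)
  show ?case
    by (rule continuous_on_cong[THEN iffD1, OF refl _ c]) (rule eq)
qed

lemma cont_coord: "continuous_on S (\<lambda>x::nat\<Rightarrow>real. x i)"
  by (rule continuous_on_subset[OF continuous_on_product_coordinates]) simp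

definition rng :: "nat \<Rightarrow> (nat \<Rightarrow> real) \<Rightarrow> real" where
  "rng n x = Max (x ` {..<n}) - Min (x ` {..<n})"

lemma liso_eq: "liso_obj n Y lam = (\<lambda>x. sqdist n Y x / 2 + lam * rng n x)"
  by (simp add: fun_eq_iff liso_obj_def rng_def)

lemma sqdist_cont: "continuous_on UNIV (sqdist n Y)"
proof -
  have "continuous_on UNIV (\<lambda>x::nat\<Rightarrow>real. \<Sum>i<n. (Y i - x i)\<^sup>2)"
    by (intro continuous_intros cont_coord)
  then show ?thesis by (simp add: sqdist_def[abs_def])
qed

lemma rng_cont:
  assumes "n \<ge> 1"
  shows "continuous_on UNIV (rng n)"
proof -
  have ne: "{..<n} \<noteq> {}" using assms by (auto simp: lessThan_empty_iff)
  have c2: "continuous_on UNIV (\<lambda>x::nat\<Rightarrow>real. Max ((\<lambda>i. x i) ` {..<n}))"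
    using cont_Max[where f="\<lambda>i x. x i" and I="{..<n}" and S=UNIV] ne cont_coord by simp
  have c3: "continuous_on UNIV (\<lambda>x::nat\<Rightarrow>real. Min ((\<lambda>i. x i) ` {..<n}))"
    using cont_Min[where f="\<lambda>i x. x i" and I="{..<n}" and S=UNIV] ne cont_coord by simp
  have "continuous_on UNIV (\<lambda>x::nat\<Rightarrow>real. Max ((\<lambda>i. x i) ` {..<n}) - Min ((\<lambda>i. x i) ` {..<n}))"
    by (rule continuous_on_diff[OF c2 c3])
  then show ?thesis by (simp add: rng_def[abs_def])
qed

lemma liso_cont:
  assumes "n \<ge> 1"
  shows "continuous_on UNIV (liso_obj n Y lam)"
proof -
  have a: "continuous_on UNIV (\<lambda>x. sqdist n Y x / 2)"
    using continuous_on_divide[OF sqdist_cont continuous_on_const[of UNIV "2::real"]] by simp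
  have b: "continuous_on UNIV (\<lambda>x. lam * rng n x)"
    using continuous_on_mult[OF continuous_on_const[of UNIV lam] rng_cont[OF assms]] by simp
  show ?thesis unfolding liso_eq by (rule continuous_on_add[OF a b])
qed


lemma monosetI:
  assumes "\<And>i. n \<le> i \<Longrightarrow> \<theta> i = 0"
    "\<And>i j. i < n \<Longrightarrow> j < n \<Longrightarrow> X i < X j \<Longrightarrow> \<theta> i \<le> \<theta> j"
    "\<And>i j. i < n \<Longrightarrow> j < n \<Longrightarrow> X i = X j \<Longrightarrow> \<theta> i = \<theta> j"
  shows "\<theta> \<in> monoset n X"
  unfolding monoset_def mem_Collect_eq using assms by blast

lemma monosetD:
  assumes "\<theta> \<in> monoset n X"
  shows "\<And>i. n \<le> i \<Longrightarrow> \<theta> i = 0"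
    "\<And>i j. i < n \<Longrightarrow> j < n \<Longrightarrow> X i < X j \<Longrightarrow> \<theta> i \<le> \<theta> j"
    "\<And>i j. i < n \<Longrightarrow> j < n \<Longrightarrow> X i = X j \<Longrightarrow> \<theta> i = \<theta> j"
  using assms unfolding monoset_def mem_Collect_eq by blast+

lemma monoset_closed: "closed (monoset n X)"
  unfolding monoset_def
  by (intro closed_Collect_conj closed_Collect_all closed_Collect_imp open_Collect_const
      closed_Collect_le closed_Collect_eq cont_coord continuous_on_const)

lemma monoset_convex:
  assumes "a \<in> monoset n X" "b \<in> monoset n X" "0 \<le> t" "t \<le> 1"
  shows "(\<lambda>i. (1 - t) * a i + t * b i) \<in> monoset n X"
proof (rule monosetI)
  have t1: "0 \<le> 1 - t" using assms by simp
  fix i assume "n \<le> i" then show "(1 - t) * a i + t * b i = 0"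
    using monosetD(1)[OF assms(1)] monosetD(1)[OF assms(2)] by simp
next
  have t1: "0 \<le> 1 - t" using assms by simp
  fix i j assume h: "i < n" "j < n" "X i < X j"
  have "a i \<le> a j" "b i \<le> b j" using monosetD(2)[OF assms(1) h] monosetD(2)[OF assms(2) h] by auto
  then show "(1 - t) * a i + t * b i \<le> (1 - t) * a j + t * b j"
    using t1 assms(3) by (intro add_mono mult_left_mono)
next
  fix i j assume h: "i < n" "j < n" "X i = X j"
  have "a i = a j" "b i = b j" using monosetD(3)[OF assms(1) h] monosetD(3)[OF assms(2) h] by auto
  then show "(1 - t) * a i + t * b i = (1 - t) * a j + t * b j" by simp
qed

lemma zero_monoset: "(\<lambda>i. 0) \<in> monoset n X"
  by (rule monosetI) auto

lemma sqdist_expand: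
  "sqdist n Y z = (\<Sum>i<n. (Y i - p i)\<^sup>2) - 2 * (\<Sum>i<n. (Y i - p i) * (z i - p i)) + (\<Sum>i<n. (z i - p i)\<^sup>2)"
proof -
  have "sqdist n Y z = (\<Sum>i<n. (Y i - p i)\<^sup>2 - 2 * ((Y i - p i) * (z i - p i)) + (z i - p i)\<^sup>2)"
    unfolding sqdist_def by (rule sum.cong) (simp_all add: power2_eq_square algebra_simps)
  also have "\<dots> = (\<Sum>i<n. (Y i - p i)\<^sup>2) - (\<Sum>i<n. 2 * ((Y i - p i) * (z i - p i))) + (\<Sum>i<n. (z i - p i)\<^sup>2)"
    by (simp add: sum.distrib sum_subtractf)
  also have "(\<Sum>i<n. 2 * ((Y i - p i) * (z i - p i))) = 2 * (\<Sum>i<n. (Y i - p i) * (z i - p i))"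
    by (simp add: sum_distrib_left)
  finally show ?thesis .
qed

lemma vi:
  assumes p: "p \<in> monoset n X" and mn: "\<forall>\<eta>\<in>monoset n X. sqdist n Y p \<le> sqdist n Y \<eta>"
    and e: "\<eta> \<in> monoset n X"
  shows "(\<Sum>i<n. (Y i - p i) * (\<eta> i - p i)) \<le> 0"
proof (rule ccontr)
  define s where "s = (\<Sum>i<n. (Y i - p i) * (\<eta> i - p i))"
  define q where "q = (\<Sum>i<n. (\<eta> i - p i)\<^sup>2)"
  define S0 where "S0 = (\<Sum>i<n. (Y i - p i)\<^sup>2)"
  assume "\<not> (\<Sum>i<n. (Y i - p i) * (\<eta> i - p i)) \<le> 0"
  then have sp: "s > 0" unfolding s_def by simp
  have q0: "q \<ge> 0" unfolding q_def by (intro sum_nonneg) simp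
  have key: "2 * s \<le> t * q" if t: "0 < t" "t \<le> 1" for t
  proof -
    define z where "z = (\<lambda>i. (1 - t) * p i + t * \<eta> i)"
    have zK: "z \<in> monoset n X" unfolding z_def using monoset_convex[OF p e, of t] t by simp
    have zp: "\<And>i. z i - p i = t * (\<eta> i - p i)" unfolding z_def by (simp add: algebra_simps)
    have "sqdist n Y z = S0 - 2 * (\<Sum>i<n. (Y i - p i) * (t * (\<eta> i - p i))) + (\<Sum>i<n. (t * (\<eta> i - p i))\<^sup>2)"
      using sqdist_expand[of n Y z p] unfolding zp S0_def .
    also have "(\<Sum>i<n. (Y i - p i) * (t * (\<eta> i - p i))) = t * s"
      unfolding s_def sum_distrib_left by (rule sum.cong) (simp_all add: algebra_simps)
    also have "(\<Sum>i<n. (t * (\<eta> i - p i))\<^sup>2) = t\<^sup>2 * q"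
      unfolding q_def sum_distrib_left by (rule sum.cong) (simp_all add: power_mult_distrib)
    finally have sz: "sqdist n Y z = S0 - 2 * (t * s) + t\<^sup>2 * q" .
    have "sqdist n Y p = S0"
      using sqdist_expand[of n Y p p] unfolding S0_def by simp
    with mn zK sz have "S0 \<le> S0 - 2 * (t * s) + t\<^sup>2 * q" by metis
    then have "t * (2 * s) \<le> t * (t * q)" by (simp add: power2_eq_square algebra_simps)
    then show ?thesis using t by simp
  qed
  have qp: "q > 0" using key[of 1] sp by simp
  define t where "t = min 1 (s / q)"
  have t0: "0 < t" "t \<le> 1" unfolding t_def using sp qp by auto
  have "t * q \<le> s" unfolding t_def using qp sp
    by (cases "1 \<le> s / q") (auto simp: min_def field_simps)
  with key[OF t0] sp show False by linarith
qed

lemma rng_nonneg: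
  assumes "n \<ge> 1" shows "rng n x \<ge> 0"
proof -
  have "0 \<in> {..<n}" using assms by simp
  then have "Min (x ` {..<n}) \<le> x 0" "x 0 \<le> Max (x ` {..<n})" by auto
  then show ?thesis unfolding rng_def by simp
qed

lemma liso_ge:
  assumes "n \<ge> 1" "lam \<ge> 0"
  shows "liso_obj n Y lam x \<ge> sqdist n Y x / 2"
  using rng_nonneg[OF assms(1), of x] assms(2) unfolding liso_eq by simp

lemma existence:
  assumes n1: "n \<ge> 1" and l0: "lam \<ge> 0"
  shows "\<exists>\<theta>\<in>monoset n X. \<forall>\<eta>\<in>monoset n X. liso_obj n Y lam \<theta> \<le> liso_obj n Y lam \<eta>"
proof -
  define c where "c = liso_obj n Y lam (\<lambda>i. 0)"
  define r where "r = sqrt (2 * \<bar>c\<bar>) + 1"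
  define S where "S = (\<lambda>i. if i < n then {- (\<bar>Y i\<bar> + r) .. \<bar>Y i\<bar> + r} else {0::real})"
  define B where "B = PiE UNIV S"
  have r0: "r \<ge> 1" unfolding r_def by simp
  have rr: "r\<^sup>2 > 2 * c"
  proof -
    have "r\<^sup>2 = (sqrt (2 * \<bar>c\<bar>))\<^sup>2 + 2 * sqrt (2 * \<bar>c\<bar>) + 1"
      unfolding r_def by (simp add: power2_eq_square algebra_simps)
    also have "(sqrt (2 * \<bar>c\<bar>))\<^sup>2 = 2 * \<bar>c\<bar>" by simp
    finally show ?thesis by (smt (verit) real_sqrt_ge_zero abs_ge_self)
  qed
  have Bmem: "x \<in> B \<longleftrightarrow> (\<forall>i. x i \<in> S i)" for x
    unfolding B_def PiE_UNIV_domain by auto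
  have "compactin (product_topology (\<lambda>i. euclidean) UNIV) (PiE UNIV S)"
    by (subst compactin_PiE) (auto simp: S_def)
  then have cB: "compact B" unfolding B_def euclidean_product_topology by simp
  have cKB: "compact (monoset n X \<inter> B)"
    by (rule closed_Int_compact[OF monoset_closed cB])
  have z: "(\<lambda>i. 0) \<in> monoset n X \<inter> B"
    using zero_monoset Bmem r0 by (auto simp: S_def)
  obtain \<theta> where th: "\<theta> \<in> monoset n X \<inter> B" and thmin: "\<forall>y\<in>monoset n X \<inter> B. liso_obj n Y lam \<theta> \<le> liso_obj n Y lam y"
    using continuous_attains_inf[OF cKB _ continuous_on_subset[OF liso_cont[OF n1] subset_UNIV]] z by blast
  have "liso_obj n Y lam \<theta> \<le> liso_obj n Y lam \<eta>" if e: "\<eta> \<in> monoset n X" for \<eta>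
  proof (cases "\<eta> \<in> B")
    case True then show ?thesis using thmin e by blast
  next
    case False
    then obtain i where i: "\<eta> i \<notin> S i" using Bmem by blast
    have "i < n"
    proof (rule ccontr)
      assume "\<not> i < n"
      then have "\<eta> i = 0" using monosetD(1)[OF e] by simp
      then show False using i \<open>\<not> i < n\<close> by (simp add: S_def)
    qed
    then have "\<bar>\<eta> i\<bar> > \<bar>Y i\<bar> + r" using i by (auto simp: S_def)
    then have "\<bar>Y i - \<eta> i\<bar> > r" by linarith
    then have "(Y i - \<eta> i)\<^sup>2 > r\<^sup>2" using r0
      by (metis abs_le_square_iff abs_of_nonneg le_less_trans linorder_not_le zero_le_one)
    moreover have "(Y i - \<eta> i)\<^sup>2 \<le> sqdist n Y \<eta>"
      unfolding sqdist_def using \<open>i < n\<close> by (intro member_le_sum) auto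
    ultimately have "sqdist n Y \<eta> > 2 * c" using rr by linarith
    then have "liso_obj n Y lam \<eta> > c" using liso_ge[OF n1 l0, of Y \<eta>] by linarith
    moreover have "liso_obj n Y lam \<theta> \<le> c" using thmin z unfolding c_def by blast
    ultimately show ?thesis by linarith
  qed
  then show ?thesis using th by blast
qed


lemma max_mid:
  fixes a b :: "nat \<Rightarrow> real"
  assumes "finite I" "I \<noteq> {}"
  shows "Max ((\<lambda>i. (1 - 1/2) * a i + 1/2 * b i) ` I) \<le> (Max (a ` I) + Max (b ` I)) / 2"
proof -
  have "Max ((\<lambda>i. (1 - 1/2) * a i + 1/2 * b i) ` I) \<in> (\<lambda>i. (1 - 1/2) * a i + 1/2 * b i) ` I"
    by (rule Max_in) (use assms in auto)
  then obtain k where k: "k \<in> I" "Max ((\<lambda>i. (1 - 1/2) * a i + 1/2 * b i) ` I) = (1 - 1/2) * a k + 1/2 * b k"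
    by blast
  have "a k \<le> Max (a ` I)" "b k \<le> Max (b ` I)" using k(1) assms by auto
  then show ?thesis using k(2) by simp
qed

lemma min_mid:
  fixes a b :: "nat \<Rightarrow> real"
  assumes "finite I" "I \<noteq> {}"
  shows "Min ((\<lambda>i. (1 - 1/2) * a i + 1/2 * b i) ` I) \<ge> (Min (a ` I) + Min (b ` I)) / 2"
proof -
  have "Min ((\<lambda>i. (1 - 1/2) * a i + 1/2 * b i) ` I) \<in> (\<lambda>i. (1 - 1/2) * a i + 1/2 * b i) ` I"
    by (rule Min_in) (use assms in auto)
  then obtain k where k: "k \<in> I" "Min ((\<lambda>i. (1 - 1/2) * a i + 1/2 * b i) ` I) = (1 - 1/2) * a k + 1/2 * b k"
    by blast
  have "Min (a ` I) \<le> a k" "Min (b ` I) \<le> b k" using k(1) assms by auto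
  then show ?thesis using k(2) by simp
qed

lemma mid_id: "(y - ((1 - 1/2) * a + 1/2 * b))\<^sup>2 = ((y - a)\<^sup>2 + (y - b)\<^sup>2) / 2 - (a - b)\<^sup>2 / (4::real)"
  by (simp add: power2_eq_square field_simps)

lemma uniq:
  assumes n1: "n \<ge> 1" and l0: "lam \<ge> 0"
    and a: "a \<in> monoset n X" and b: "b \<in> monoset n X"
    and ma: "\<forall>\<eta>\<in>monoset n X. liso_obj n Y lam a \<le> liso_obj n Y lam \<eta>"
    and mb: "\<forall>\<eta>\<in>monoset n X. liso_obj n Y lam b \<le> liso_obj n Y lam \<eta>"
  shows "a = b"
proof -
  define m where "m = (\<lambda>i. (1 - 1/2) * a i + 1/2 * (b i::real))"
  have mK: "m \<in> monoset n X" unfolding m_def by (rule monoset_convex[OF a b]) auto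
  define D where "D = (\<Sum>i<n. (a i - b i)\<^sup>2)"
  have "sqdist n Y m = (\<Sum>i<n. ((Y i - a i)\<^sup>2 + (Y i - b i)\<^sup>2) / 2 - (a i - b i)\<^sup>2 / 4)"
    unfolding sqdist_def m_def by (rule sum.cong) (simp_all add: power2_eq_square field_simps)
  also have "\<dots> = (sqdist n Y a + sqdist n Y b) / 2 - D / 4"
    unfolding sqdist_def D_def by (simp add: sum_subtractf sum_divide_distrib[symmetric] sum.distrib)
  finally have sm: "sqdist n Y m = (sqdist n Y a + sqdist n Y b) / 2 - D / 4" .
  have ne: "{..<n} \<noteq> {}" "finite {..<n}" using n1 by (auto simp: lessThan_empty_iff)
  have "rng n m \<le> (rng n a + rng n b) / 2"
    using max_mid[OF ne(2,1), of a b] min_mid[OF ne(2,1), of a b] unfolding rng_def m_def by simp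
  then have "lam * rng n m \<le> lam * ((rng n a + rng n b) / 2)" using l0 by (rule mult_left_mono)
  moreover have "liso_obj n Y lam m = (sqdist n Y a + sqdist n Y b) / 4 - D / 8 + lam * rng n m"
    unfolding liso_eq sm by simp
  moreover have "(liso_obj n Y lam a + liso_obj n Y lam b) / 2 = (sqdist n Y a + sqdist n Y b) / 4 + lam * ((rng n a + rng n b) / 2)"
    unfolding liso_eq by (simp add: field_simps)
  ultimately have "liso_obj n Y lam m \<le> (liso_obj n Y lam a + liso_obj n Y lam b) / 2 - D / 8"
    by linarith
  moreover have "liso_obj n Y lam a \<le> liso_obj n Y lam m" "liso_obj n Y lam a = liso_obj n Y lam b"
    using ma mb mK a b by (auto intro: order.antisym)
  ultimately have ff: "liso_obj n Y lam m \<le> (liso_obj n Y lam a + liso_obj n Y lam b) / 2 - D / 8"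
     "liso_obj n Y lam a \<le> liso_obj n Y lam m" "liso_obj n Y lam a = liso_obj n Y lam b" by auto
  have "D / 8 \<le> 0" using ff(1) ff(2) unfolding ff(3) by simp
  then have "D \<le> 0" by simp
  moreover have "D \<ge> 0" unfolding D_def by (intro sum_nonneg) simp
  ultimately have "D = 0" by simp
  then have "\<forall>i\<in>{..<n}. (a i - b i)\<^sup>2 = 0" unfolding D_def
    by (subst sum_nonneg_eq_0_iff[symmetric]) auto
  then show "a = b"
  proof (intro ext)
    fix i assume h: "\<forall>i\<in>{..<n}. (a i - b i)\<^sup>2 = 0"
    show "a i = b i"
    proof (cases "i < n")
      case True then show ?thesis using h by simp
    next
      case False then show ?thesis using monosetD(1)[OF a] monosetD(1)[OF b] by simp
    qed
  qed
qed

lemma liso0: "liso_obj n Y 0 \<theta> = sqdist n Y \<theta> / 2"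
  unfolding liso_eq by simp

lemma clip_lip: "(m::real) \<le> M \<Longrightarrow> x \<le> y \<Longrightarrow> min M (max m y) - min M (max m x) \<le> y - x"
  by (simp add: min_def max_def)

theorem theorem1:
  fixes n :: nat and X Y :: "nat \<Rightarrow> real" and lam :: real
  assumes "n \<ge> 1" and "lam \<ge> 0"
  shows "(\<exists>!\<theta>. \<theta> \<in> monoset n X \<and>
            (\<forall>\<eta>\<in>monoset n X. liso_obj n Y lam \<theta> \<le> liso_obj n Y lam \<eta>)) \<and>
         (\<forall>\<theta>. (\<theta> \<in> monoset n X \<and>
            (\<forall>\<eta>\<in>monoset n X. liso_obj n Y lam \<theta> \<le> liso_obj n Y lam \<eta>)) \<longrightarrow>
            (\<exists>A B :: ereal. A \<le> B \<and>
               (\<forall>i<n. ereal (\<theta> i) = min B (max A (ereal (pava n X Y i))))))"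
proof
  note n1 = assms(1) and l0 = assms(2)
  let ?K = "monoset n X"
  let ?L = "liso_obj n Y lam"
  show ex1: "\<exists>!\<theta>. \<theta> \<in> ?K \<and> (\<forall>\<eta>\<in>?K. ?L \<theta> \<le> ?L \<eta>)"
  proof -
    obtain \<theta> where "\<theta> \<in> ?K" "\<forall>\<eta>\<in>?K. ?L \<theta> \<le> ?L \<eta>" using existence[OF n1 l0] by blast
    then show ?thesis using uniq[OF n1 l0] by blast
  qed
  define p where "p = pava n X Y"
  have pex: "\<exists>!\<theta>. \<theta> \<in> ?K \<and> (\<forall>\<eta>\<in>?K. sqdist n Y \<theta> \<le> sqdist n Y \<eta>)"
  proof -
    obtain \<theta> where t: "\<theta> \<in> ?K" "\<forall>\<eta>\<in>?K. liso_obj n Y 0 \<theta> \<le> liso_obj n Y 0 \<eta>"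
      using existence[OF n1 order.refl] by blast
    have u: "a = b" if "a \<in> ?K" "b \<in> ?K" "\<forall>\<eta>\<in>?K. sqdist n Y a \<le> sqdist n Y \<eta>"
       "\<forall>\<eta>\<in>?K. sqdist n Y b \<le> sqdist n Y \<eta>" for a b
      by (rule uniq[OF n1 order.refl that(1,2)]) (use that in \<open>simp add: liso0\<close>)+
    show ?thesis using t u unfolding liso0 by (intro ex1I[of _ \<theta>]) auto
  qed
  have pP: "p \<in> ?K \<and> (\<forall>\<eta>\<in>?K. sqdist n Y p \<le> sqdist n Y \<eta>)"
    unfolding p_def pava_def by (rule theI'[OF pex])
  then have pK: "p \<in> ?K" and pmin: "\<forall>\<eta>\<in>?K. sqdist n Y p \<le> sqdist n Y \<eta>" by auto
  show "\<forall>\<theta>. (\<theta> \<in> ?K \<and> (\<forall>\<eta>\<in>?K. ?L \<theta> \<le> ?L \<eta>)) \<longrightarrow>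
            (\<exists>A B :: ereal. A \<le> B \<and> (\<forall>i<n. ereal (\<theta> i) = min B (max A (ereal (pava n X Y i)))))"
  proof (intro allI impI, elim conjE)
    fix \<theta> assume tK: "\<theta> \<in> ?K" and tmin: "\<forall>\<eta>\<in>?K. ?L \<theta> \<le> ?L \<eta>"
    have ne: "{..<n} \<noteq> {}" "finite {..<n}" using n1 by (auto simp: lessThan_empty_iff)
    define m where "m = Min (\<theta> ` {..<n})"
    define M where "M = Max (\<theta> ` {..<n})"
    have tb: "m \<le> \<theta> i" "\<theta> i \<le> M" if "i < n" for i
      using that ne unfolding m_def M_def by auto
    have mM: "m \<le> M" using tb[of 0] n1 by simp
    define c where "c = (\<lambda>i. if i < n then min M (max m (p i)) else 0)"
    define d where "d = (\<lambda>i. 2 * p i - c i)"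
    have cK: "c \<in> ?K"
    proof (rule monosetI)
      fix i assume "n \<le> i" then show "c i = 0" unfolding c_def by simp
    next
      fix i j assume h: "i < n" "j < n" "X i < X j"
      then have "p i \<le> p j" using monosetD(2)[OF pK] by blast
      then show "c i \<le> c j" unfolding c_def using h by (simp add: min_def max_def)
    next
      fix i j assume h: "i < n" "j < n" "X i = X j"
      then have "p i = p j" using monosetD(3)[OF pK] by blast
      then show "c i = c j" unfolding c_def using h by simp
    qed
    have dK: "d \<in> ?K"
    proof (rule monosetI)
      fix i assume "n \<le> i" then show "d i = 0" unfolding d_def c_def using monosetD(1)[OF pK] by simp
    next
      fix i j assume h: "i < n" "j < n" "X i < X j"
      then have pij: "p i \<le> p j" using monosetD(2)[OF pK] by blast
      have "c j - c i \<le> p j - p i" unfolding c_def using h clip_lip[OF mM pij] by simp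
      then show "d i \<le> d j" unfolding d_def using pij by simp
    next
      fix i j assume h: "i < n" "j < n" "X i = X j"
      then have "p i = p j" using monosetD(3)[OF pK] by blast
      then show "d i = d j" unfolding d_def c_def using h by simp
    qed
    define S0 where "S0 = (\<Sum>i<n. (Y i - p i)\<^sup>2)"
    have v1: "(\<Sum>i<n. (Y i - p i) * (\<theta> i - p i)) \<le> 0" by (rule vi[OF pK pmin tK])
    have v2: "(\<Sum>i<n. (Y i - p i) * (d i - p i)) \<le> 0" by (rule vi[OF pK pmin dK])
    have "(\<Sum>i<n. (Y i - p i) * (c i - p i)) = - (\<Sum>i<n. (Y i - p i) * (d i - p i))"
      unfolding sum_negf[symmetric] by (rule sum.cong) (simp_all add: d_def algebra_simps)
    with v2 have v2': "(\<Sum>i<n. (Y i - p i) * (c i - p i)) \<ge> 0" by simp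
    have sq: "(c i - p i)\<^sup>2 \<le> (\<theta> i - p i)\<^sup>2" if "i < n" for i
    proof -
      have "\<bar>c i - p i\<bar> \<le> \<bar>\<theta> i - p i\<bar>"
        using tb[OF that] that unfolding c_def by (simp add: min_def max_def abs_if)
      then show ?thesis by (simp add: abs_le_square_iff)
    qed
    have "sqdist n Y c = S0 - 2 * (\<Sum>i<n. (Y i - p i) * (c i - p i)) + (\<Sum>i<n. (c i - p i)\<^sup>2)"
      unfolding S0_def by (rule sqdist_expand)
    also have "\<dots> \<le> S0 - 2 * (\<Sum>i<n. (Y i - p i) * (\<theta> i - p i)) + (\<Sum>i<n. (\<theta> i - p i)\<^sup>2)"
      using v1 v2' sum_mono[of "{..<n}" "\<lambda>i. (c i - p i)\<^sup>2" "\<lambda>i. (\<theta> i - p i)\<^sup>2"] sq by auto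
    also have "\<dots> = sqdist n Y \<theta>"
      unfolding S0_def by (rule sqdist_expand[symmetric])
    finally have sqc: "sqdist n Y c \<le> sqdist n Y \<theta>" .
    have cb: "m \<le> c i" "c i \<le> M" if "i < n" for i
      using that mM unfolding c_def by (auto simp: min_def max_def)
    have "Max (c ` {..<n}) \<le> M" using ne cb by auto
    moreover have "m \<le> Min (c ` {..<n})" using ne cb by auto
    ultimately have "rng n c \<le> rng n \<theta>" unfolding rng_def m_def M_def by simp
    then have "lam * rng n c \<le> lam * rng n \<theta>" using l0 by (rule mult_left_mono)
    then have "?L c \<le> ?L \<theta>" using sqc unfolding liso_eq by simp
    then have cmin: "\<forall>\<eta>\<in>?K. ?L c \<le> ?L \<eta>" using tmin by auto
    have ct: "c = \<theta>" by (rule uniq[OF n1 l0 cK tK cmin tmin])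
    show "\<exists>A B :: ereal. A \<le> B \<and> (\<forall>i<n. ereal (\<theta> i) = min B (max A (ereal (pava n X Y i))))"
    proof (intro exI conjI allI impI)
      show "ereal m \<le> ereal M" using mM by simp
      fix i assume "i < n"
      then have "c i = min M (max m (p i))" unfolding c_def by simp
      then have "\<theta> i = min M (max m (p i))" using ct by simp
      then show "ereal (\<theta> i) = min (ereal M) (max (ereal m) (ereal (pava n X Y i)))"
        unfolding p_def by simp
    qed
  qed
qed

end
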